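(* Let $SG=(G,\sigma)$ be a signed graph with a total order on $E(G)$. If $z\in C^i(G)$ satisfies $f_b(z)=0$, then $f_b(d(z))=0$. Consequently $d_b:C^i_b(SG)\to C^{i+1}_b(SG)$ satisfies $d_b\circ f_b=f_b\circ d$ and $d_b\circ d_b=0$.
   Context: Signed graphs: $SG=(G,\sigma)$, $G$ finite (loops, multiple edges allowed), $\sigma:E(G)\to\{\pm1\}$. Negative circuit: product of edge signs $-1$; balanced = no negative circuit. $[G:s]$, $[SG:s]$: spanning subgraph with edge set $s$. Fix a total order on $E(G)$. An enhanced state of $G$ is $S=(s,c)$, $c$ labels each component of $[G:s]$ by $1$ or $x$; $C^i(G)$ is free on enhanced states with $|s|=i$. With $m(1,1)=1$, $m(1,x)=m(x,1)=x$, $m(x,x)=0$: for $e\notin s$, $S_e=(s\cup\{e\},c_e)$ where a component containing both ends of $e$ keeps its label and if $e$ joins components $E_i,E_j$ the merged one gets $m(c(E_i),c(E_j))$ ($S_e=0$ if both are $x$). $d(S)=\sum_{e\notin s}(-1)^{n(e)}S_e$, $n(e)$ = number of edges of $s$ preceding $e$; it is known that $d\circ d=0$. $C^i_b(SG)\subseteq C^i(G)$ is spanned by enhanced states with $[SG:s]$ balanced; $f_b:C^i(G)\to C^i_b(SG)$ is the linear projection sending an enhanced state to itself if $[SG:s]$ is balanced and to $0$ otherwise; $d_b(S):=f_b(d(S))$. *)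

theory Defs
  imports Main
begin

text \<open>A finite graph (loops and multiple edges allowed) is given by a vertex set V,
an edge set E and an endpoint map ends :: 'e => 'v * 'v. A signed graph adds
sigma :: 'e => int with values in {1,-1}. The total order on E(G) is a strict
linear order lo (a relation) on E.\<close>

definition adj :: "('e \<Rightarrow> 'v \<times> 'v) \<Rightarrow> 'e set \<Rightarrow> ('v \<times> 'v) set" where
  "adj ends s = {(u, w). \<exists>e\<in>s. ends e = (u, w) \<or> ends e = (w, u)}"

definition comp_of :: "'v set \<Rightarrow> ('e \<Rightarrow> 'v \<times> 'v) \<Rightarrow> 'e set \<Rightarrow> 'v \<Rightarrow> 'v set" where
  "comp_of V ends s v = {w \<in> V. (v, w) \<in> (adj ends s)\<^sup>*}"

definition comps :: "'v set \<Rightarrow> ('e \<Rightarrow> 'v \<times> 'v) \<Rightarrow> 'e set \<Rightarrow> 'v set set" where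
  "comps V ends s = comp_of V ends s ` V"

text \<open>Enhanced states (s, c): label x is encoded by True, label 1 by False;
c is False outside the components of [G:s] (canonical representative).\<close>
type_synonym ('e, 'v) estate = "'e set \<times> ('v set \<Rightarrow> bool)"

definition enh_states :: "'v set \<Rightarrow> 'e set \<Rightarrow> ('e \<Rightarrow> 'v \<times> 'v) \<Rightarrow> ('e, 'v) estate set" where
  "enh_states V E ends = {(s, c). s \<subseteq> E \<and> (\<forall>K. K \<notin> comps V ends s \<longrightarrow> \<not> c K)}"

text \<open>S_e is zero iff e joins two distinct components both labelled x.\<close>
definition killed :: "'v set \<Rightarrow> ('e \<Rightarrow> 'v \<times> 'v) \<Rightarrow> 'e set \<Rightarrow> ('v set \<Rightarrow> bool) \<Rightarrow> 'e \<Rightarrow> bool" where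
  "killed V ends s c e =
     (comp_of V ends s (fst (ends e)) \<noteq> comp_of V ends s (snd (ends e))
      \<and> c (comp_of V ends s (fst (ends e))) \<and> c (comp_of V ends s (snd (ends e))))"

text \<open>The labelling c_e of [G : s \<union> {e}]: unchanged components keep their label,
a merged component gets m(c(E_i), c(E_j)) (here: disjunction, the case x,x being killed).\<close>
definition merged_label :: "'v set \<Rightarrow> ('e \<Rightarrow> 'v \<times> 'v) \<Rightarrow> 'e set \<Rightarrow> ('v set \<Rightarrow> bool) \<Rightarrow> 'e \<Rightarrow> 'v set \<Rightarrow> bool" where
  "merged_label V ends s c e = (\<lambda>K.
     if K \<in> comps V ends (insert e s) then
       (if K \<in> comps V ends s then c K
        else (c (comp_of V ends s (fst (ends e))) \<or> c (comp_of V ends s (snd (ends e)))))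
     else False)"

definition edge_pos :: "('e \<times> 'e) set \<Rightarrow> 'e set \<Rightarrow> 'e \<Rightarrow> nat" where
  "edge_pos lo s e = card {e' \<in> s. (e', e) \<in> lo}"

definition dstate :: "'v set \<Rightarrow> 'e set \<Rightarrow> ('e \<Rightarrow> 'v \<times> 'v) \<Rightarrow> ('e \<times> 'e) set
    \<Rightarrow> ('e, 'v) estate \<Rightarrow> ('e, 'v) estate \<Rightarrow> int" where
  "dstate V E ends lo S T = (case S of (s, c) \<Rightarrow>
     (\<Sum>e\<in>E - s. if \<not> killed V ends s c e \<and> T = (insert e s, merged_label V ends s c e)
                 then (-1) ^ edge_pos lo s e else 0))"

text \<open>Chains are integer-valued functions on enhanced states (finite support in the
set of enhanced states); C^i(G) is the free abelian group on enhanced states with |s| = i.\<close>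
definition C_grp :: "'v set \<Rightarrow> 'e set \<Rightarrow> ('e \<Rightarrow> 'v \<times> 'v) \<Rightarrow> nat \<Rightarrow> (('e, 'v) estate \<Rightarrow> int) set" where
  "C_grp V E ends i = {z. \<forall>S. z S \<noteq> 0 \<longrightarrow> S \<in> enh_states V E ends \<and> card (fst S) = i}"

definition dmap :: "'v set \<Rightarrow> 'e set \<Rightarrow> ('e \<Rightarrow> 'v \<times> 'v) \<Rightarrow> ('e \<times> 'e) set
    \<Rightarrow> (('e, 'v) estate \<Rightarrow> int) \<Rightarrow> (('e, 'v) estate \<Rightarrow> int)" where
  "dmap V E ends lo z = (\<lambda>T. \<Sum>S\<in>enh_states V E ends. z S * dstate V E ends lo S T)"

text \<open>Circuits: edge sets of cycles (loops are circuits of length 1, a pair of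
parallel edges a circuit of length 2).\<close>
definition is_circuit :: "('e \<Rightarrow> 'v \<times> 'v) \<Rightarrow> 'e set \<Rightarrow> bool" where
  "is_circuit ends F = (\<exists>es vs. length es = length vs \<and> es \<noteq> [] \<and> distinct es \<and> distinct vs
     \<and> set es = F
     \<and> (\<forall>j < length es. ends (es ! j) = (vs ! j, vs ! ((j + 1) mod length es))
                      \<or> ends (es ! j) = (vs ! ((j + 1) mod length es), vs ! j)))"

definition balanced :: "('e \<Rightarrow> 'v \<times> 'v) \<Rightarrow> ('e \<Rightarrow> int) \<Rightarrow> 'e set \<Rightarrow> bool" where
  "balanced ends \<sigma> s = (\<forall>F. F \<subseteq> s \<longrightarrow> is_circuit ends F \<longrightarrow> (\<Prod>e\<in>F. \<sigma> e) \<noteq> -1)"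

definition fb :: "('e \<Rightarrow> 'v \<times> 'v) \<Rightarrow> ('e \<Rightarrow> int) \<Rightarrow> (('e, 'v) estate \<Rightarrow> int) \<Rightarrow> (('e, 'v) estate \<Rightarrow> int)" where
  "fb ends \<sigma> z = (\<lambda>S. if balanced ends \<sigma> (fst S) then z S else 0)"

definition Cb_grp :: "'v set \<Rightarrow> 'e set \<Rightarrow> ('e \<Rightarrow> 'v \<times> 'v) \<Rightarrow> ('e \<Rightarrow> int) \<Rightarrow> nat
    \<Rightarrow> (('e, 'v) estate \<Rightarrow> int) set" where
  "Cb_grp V E ends \<sigma> i = {z \<in> C_grp V E ends i. \<forall>S. z S \<noteq> 0 \<longrightarrow> balanced ends \<sigma> (fst S)}"

definition db :: "'v set \<Rightarrow> 'e set \<Rightarrow> ('e \<Rightarrow> 'v \<times> 'v) \<Rightarrow> ('e \<Rightarrow> int) \<Rightarrow> ('e \<times> 'e) set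
    \<Rightarrow> (('e, 'v) estate \<Rightarrow> int) \<Rightarrow> (('e, 'v) estate \<Rightarrow> int)" where
  "db V E ends \<sigma> lo z = fb ends \<sigma> (dmap V E ends lo z)"

end

theory Submission
  imports Defs
begin


lemma adj_sym: "sym (adj ends s)" by (auto simp: adj_def sym_def)
lemma rtr_sym: "(u,w) \<in> (adj ends s)\<^sup>* \<Longrightarrow> (w,u) \<in> (adj ends s)\<^sup>*"
  by (metis sym_rtrancl[OF adj_sym] symD)
lemma rtr_insert:
  assumes "(v,w) \<in> (adj ends s \<union> {(a,b),(b,a)})\<^sup>*"
  shows "(v,w) \<in> (adj ends s)\<^sup>* \<or> ((v,a) \<in> (adj ends s)\<^sup>* \<and> (b,w) \<in> (adj ends s)\<^sup>*) \<or> ((v,b) \<in> (adj ends s)\<^sup>* \<and> (a,w) \<in> (adj ends s)\<^sup>*)"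
  using assms
proof (induction rule: rtrancl_induct)
  case base then show ?case by simp
next
  case (step y z)
  let ?R = "adj ends s"
  from step(2) consider "(y,z) \<in> ?R" | "y = a" "z = b" | "y = b" "z = a" by blast
  then show ?case
  proof cases
    case 1 then show ?thesis using step(3) by (meson rtrancl.rtrancl_into_rtrancl)
  next
    case 2 then show ?thesis using step(3) rtr_sym[of b a ends s] rtrancl_trans[of v a ?R b] by blast
  next
    case 3 then show ?thesis using step(3) rtr_sym[of a b ends s] rtrancl_trans[of v b ?R a] by blast
  qed
qed

lemma adj_insert: "ends e = (a,b) \<Longrightarrow> adj ends (insert e s) = adj ends s \<union> {(a,b),(b,a)}"
  by (auto simp: adj_def)
lemma comp_insert:
  assumes "ends e = (a,b)" "a \<in> V" "b \<in> V"
  shows "comp_of V ends (insert e s) v = (if a \<in> comp_of V ends s v \<or> b \<in> comp_of V ends s v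
     then comp_of V ends s a \<union> comp_of V ends s b else comp_of V ends s v)"
proof -
  let ?R = "adj ends s" let ?R' = "adj ends s \<union> {(a,b),(b,a)}"
  have m: "?R\<^sup>* \<subseteq> ?R'\<^sup>*" by (rule rtrancl_mono) blast
  have ab: "(a,b) \<in> ?R'\<^sup>*" "(b,a) \<in> ?R'\<^sup>*" by auto
  have eq: "comp_of V ends (insert e s) v = {w \<in> V. (v,w) \<in> ?R'\<^sup>*}"
    unfolding comp_of_def adj_insert[where ends=ends and e=e and a=a and b=b and s=s, OF assms(1)] ..
  show ?thesis
  proof (cases "a \<in> comp_of V ends s v \<or> b \<in> comp_of V ends s v")
    case True
    then have va: "(v,a) \<in> ?R'\<^sup>*" "(v,b) \<in> ?R'\<^sup>*" using m ab unfolding comp_of_def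
      by (auto intro: rtrancl_trans)
    have "{w \<in> V. (v,w) \<in> ?R'\<^sup>*} = comp_of V ends s a \<union> comp_of V ends s b"
    proof (intro equalityI subsetI)
      fix w assume w: "w \<in> {w \<in> V. (v,w) \<in> ?R'\<^sup>*}"
      then have "(v,w) \<in> ?R\<^sup>* \<or> (b,w) \<in> ?R\<^sup>* \<or> (a,w) \<in> ?R\<^sup>*" using rtr_insert[of v w ends s a b] by blast
      moreover have "(v,a) \<in> ?R\<^sup>* \<or> (v,b) \<in> ?R\<^sup>*" using True unfolding comp_of_def by blast
      ultimately show "w \<in> comp_of V ends s a \<union> comp_of V ends s b" using w rtr_sym[of _ _ ends s]
        unfolding comp_of_def by (blast intro: rtrancl_trans)
    next
      fix w assume "w \<in> comp_of V ends s a \<union> comp_of V ends s b"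
      then show "w \<in> {w \<in> V. (v,w) \<in> ?R'\<^sup>*}" using va m unfolding comp_of_def
        by (blast intro: rtrancl_trans)
    qed
    then show ?thesis using True eq by simp
  next
    case False
    have "{w \<in> V. (v,w) \<in> ?R'\<^sup>*} = comp_of V ends s v"
    proof (intro equalityI subsetI)
      fix w assume w: "w \<in> {w \<in> V. (v,w) \<in> ?R'\<^sup>*}"
      have "\<not> (v,a) \<in> ?R\<^sup>*" "\<not> (v,b) \<in> ?R\<^sup>*" using False assms(2,3) unfolding comp_of_def by auto
      then show "w \<in> comp_of V ends s v" using w rtr_insert[of v w ends s a b] unfolding comp_of_def by blast
    next
      fix w assume "w \<in> comp_of V ends s v"
      then show "w \<in> {w \<in> V. (v,w) \<in> ?R'\<^sup>*}" using m unfolding comp_of_def by blast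
    qed
    then show ?thesis using False eq by simp
  qed
qed
lemma adj_mono: "s \<subseteq> t \<Longrightarrow> adj ends s \<subseteq> adj ends t" by (auto simp: adj_def)
lemma comp_sub: "comp_of V ends s v \<subseteq> V" by (auto simp: comp_of_def)
lemma comp_self: "v \<in> V \<Longrightarrow> v \<in> comp_of V ends s v" by (auto simp: comp_of_def)
lemma comp_eq: "x \<in> comp_of V ends s v \<Longrightarrow> comp_of V ends s x = comp_of V ends s v"
  unfolding comp_of_def using rtr_sym[of v x ends s] rtrancl_trans[of x v "adj ends s"] rtrancl_trans[of v x "adj ends s"] by blast
lemma comp_mono: "s \<subseteq> t \<Longrightarrow> comp_of V ends s v \<subseteq> comp_of V ends t v"
  unfolding comp_of_def using rtrancl_mono[OF adj_mono] by blast
definition badp where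
 "badp V ends s c t = (\<exists>v\<in>V. \<exists>w\<in>V. comp_of V ends t v = comp_of V ends t w
    \<and> comp_of V ends s v \<noteq> comp_of V ends s w \<and> c (comp_of V ends s v) \<and> c (comp_of V ends s w))"

definition pushl where
 "pushl V ends s c t = (\<lambda>K. if K \<in> comps V ends t then (\<exists>w\<in>K. c (comp_of V ends s w)) else False)"

lemma push_single:
  assumes "ends e = (a,b)" "a \<in> V" "b \<in> V"
  shows "merged_label V ends s c e = pushl V ends s c (insert e s)"
proof
  fix K
  show "merged_label V ends s c e K = pushl V ends s c (insert e s) K"
  proof (cases "K \<in> comps V ends (insert e s)")
    case False then show ?thesis by (simp add: merged_label_def pushl_def)
  next
    case Kt: True
    then obtain v where v: "v \<in> V" "K = comp_of V ends (insert e s) v" by (auto simp: comps_def)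
    show ?thesis
    proof (cases "K \<in> comps V ends s")
      case True
      then obtain v' where v': "v' \<in> V" "K = comp_of V ends s v'" by (auto simp: comps_def)
      have all: "\<forall>w\<in>K. comp_of V ends s w = K" using v'(2) comp_eq[of _ V ends s v'] by blast
      have "v' \<in> K" using v' comp_self[of v' V ends s] by simp
      then have "(\<exists>w\<in>K. c (comp_of V ends s w)) = c K" using all by metis
      then show ?thesis using True Kt
        by (simp add: merged_label_def pushl_def)
    next
      case False
      have ci: "comp_of V ends (insert e s) v = (if a \<in> comp_of V ends s v \<or> b \<in> comp_of V ends s v
     then comp_of V ends s a \<union> comp_of V ends s b else comp_of V ends s v)"
        by (rule comp_insert[where ends=ends and e=e and a=a and b=b and V=V, OF assms])
      have "a \<in> comp_of V ends s v \<or> b \<in> comp_of V ends s v"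
      proof (rule ccontr)
        assume "\<not> ?thesis"
        then have "K = comp_of V ends s v" using ci v(2) by simp
        then have "K \<in> comps V ends s" using v(1) unfolding comps_def by blast
        then show False using False by blast
      qed
      then have K: "K = comp_of V ends s a \<union> comp_of V ends s b" using ci v(2) by simp
      have ex: "(\<exists>w\<in>K. c (comp_of V ends s w)) = (c (comp_of V ends s a) \<or> c (comp_of V ends s b))"
      proof
        assume "\<exists>w\<in>K. c (comp_of V ends s w)"
        then obtain w where w: "w \<in> K" "c (comp_of V ends s w)" by blast
        from w(1) have "w \<in> comp_of V ends s a \<or> w \<in> comp_of V ends s b" unfolding K by blast
        then show "c (comp_of V ends s a) \<or> c (comp_of V ends s b)"
        proof
          assume "w \<in> comp_of V ends s a"
          then have "comp_of V ends s w = comp_of V ends s a" by (rule comp_eq)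
          then show ?thesis using w(2) by simp
        next
          assume "w \<in> comp_of V ends s b"
          then have "comp_of V ends s w = comp_of V ends s b" by (rule comp_eq)
          then show ?thesis using w(2) by simp
        qed
      next
        assume "c (comp_of V ends s a) \<or> c (comp_of V ends s b)"
        moreover have "a \<in> K" "b \<in> K" unfolding K using comp_self[of a V ends s] comp_self[of b V ends s] assms(2,3) by blast+
        ultimately show "\<exists>w\<in>K. c (comp_of V ends s w)" by blast
      qed
      show ?thesis using False Kt assms(1) ex
        by (simp add: merged_label_def pushl_def)
    qed
  qed
qed

lemma killed_bad:
  assumes "ends e = (a,b)" "a \<in> V" "b \<in> V"
  shows "killed V ends s c e = badp V ends s c (insert e s)"
proof
  assume k: "killed V ends s c e"
  have ci: "\<And>v. comp_of V ends (insert e s) v = (if a \<in> comp_of V ends s v \<or> b \<in> comp_of V ends s v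
     then comp_of V ends s a \<union> comp_of V ends s b else comp_of V ends s v)"
    by (rule comp_insert[where ends=ends and e=e and a=a and b=b and V=V, OF assms])
  have "a \<in> comp_of V ends s a" by (rule comp_self[OF assms(2)])
  have "b \<in> comp_of V ends s b" by (rule comp_self[OF assms(3)])
  then have "comp_of V ends (insert e s) a = comp_of V ends (insert e s) b" using ci[of a] ci[of b] \<open>a \<in> comp_of V ends s a\<close> by simp
  moreover have "comp_of V ends s a \<noteq> comp_of V ends s b" "c (comp_of V ends s a)" "c (comp_of V ends s b)"
    using k assms(1) unfolding killed_def by simp_all
  ultimately show "badp V ends s c (insert e s)" using assms(2,3)
    unfolding badp_def by blast
next
  assume "badp V ends s c (insert e s)"
  then obtain v w where vw: "v \<in> V" "w \<in> V" "comp_of V ends (insert e s) v = comp_of V ends (insert e s) w"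
    "comp_of V ends s v \<noteq> comp_of V ends s w" "c (comp_of V ends s v)" "c (comp_of V ends s w)"
    unfolding badp_def by blast
  have ci: "\<And>v. comp_of V ends (insert e s) v = (if a \<in> comp_of V ends s v \<or> b \<in> comp_of V ends s v
     then comp_of V ends s a \<union> comp_of V ends s b else comp_of V ends s v)"
    by (rule comp_insert[where ends=ends and e=e and a=a and b=b and V=V, OF assms])
  have wt: "w \<in> comp_of V ends (insert e s) v" using vw(2,3) comp_self[of w V ends "insert e s"] by simp
  have vt: "v \<in> comp_of V ends (insert e s) w" using vw(1,3) comp_self[of v V ends "insert e s"] by simp
  have cv: "a \<in> comp_of V ends s v \<or> b \<in> comp_of V ends s v"
  proof (rule ccontr)
    assume "\<not> ?thesis"
    then have "w \<in> comp_of V ends s v" using ci[of v] wt by simp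
    then show False using comp_eq[of w V ends s v] vw(4) by simp
  qed
  have cw: "a \<in> comp_of V ends s w \<or> b \<in> comp_of V ends s w"
  proof (rule ccontr)
    assume "\<not> ?thesis"
    then have "v \<in> comp_of V ends s w" using ci[of w] vt by simp
    then show False using comp_eq[of v V ends s w] vw(4) by simp
  qed
  have cv': "comp_of V ends s v = comp_of V ends s a \<or> comp_of V ends s v = comp_of V ends s b"
    using cv comp_eq[of a V ends s v] comp_eq[of b V ends s v] by auto
  have cw': "comp_of V ends s w = comp_of V ends s a \<or> comp_of V ends s w = comp_of V ends s b"
    using cw comp_eq[of a V ends s w] comp_eq[of b V ends s w] by auto
  have "comp_of V ends s a \<noteq> comp_of V ends s b \<and> c (comp_of V ends s a) \<and> c (comp_of V ends s b)"
    using cv' cw' vw(4-6) by auto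
  then show "killed V ends s c e" unfolding killed_def using assms(1) by simp
qed

lemma comp_in:
  assumes "s \<subseteq> t" "x \<in> comp_of V ends s v"
  shows "comp_of V ends t x = comp_of V ends t v"
proof -
  have "x \<in> comp_of V ends t v" using comp_mono[OF assms(1), of V ends v] assms(2) by blast
  then show ?thesis by (rule comp_eq)
qed

lemma comp_coarsen:
  assumes "s \<subseteq> t" "comp_of V ends s v = comp_of V ends s w" "w \<in> V"
  shows "comp_of V ends t v = comp_of V ends t w"
proof -
  have "w \<in> comp_of V ends s v" using assms(2) comp_self[OF assms(3), of ends s] by simp
  then show ?thesis using comp_in[OF assms(1)] by metis
qed

lemma push_trans:
  assumes "s \<subseteq> t" "t \<subseteq> u"
  shows "pushl V ends t (pushl V ends s c t) u = pushl V ends s c u"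
proof
  fix K
  show "pushl V ends t (pushl V ends s c t) u K = pushl V ends s c u K"
  proof (cases "K \<in> comps V ends u")
    case False then show ?thesis by (simp add: pushl_def)
  next
    case True
    then obtain v where v: "v \<in> V" "K = comp_of V ends u v" by (auto simp: comps_def)
    have "(\<exists>w\<in>K. pushl V ends s c t (comp_of V ends t w)) = (\<exists>x\<in>K. c (comp_of V ends s x))"
    proof
      assume "\<exists>w\<in>K. pushl V ends s c t (comp_of V ends t w)"
      then obtain w where w: "w \<in> K" "pushl V ends s c t (comp_of V ends t w)" by blast
      then obtain x where x: "x \<in> comp_of V ends t w" "c (comp_of V ends s x)"
        unfolding pushl_def by (metis (full_types))
      have "comp_of V ends u x = comp_of V ends u w" by (rule comp_in[OF assms(2) x(1)])
      also have "\<dots> = K" using w(1) v(2) comp_eq[of w V ends u v] by simp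
      finally have xK: "comp_of V ends u x = K" .
      have xV: "x \<in> V" using comp_sub[of V ends t w] x(1) by blast
      have "x \<in> K" using comp_self[OF xV, of ends u] xK by simp
      then show "\<exists>x\<in>K. c (comp_of V ends s x)" using x by blast
    next
      assume "\<exists>x\<in>K. c (comp_of V ends s x)"
      then obtain x where x: "x \<in> K" "c (comp_of V ends s x)" by blast
      have xV: "x \<in> V" using x(1) v(2) comp_sub[of V ends u v] by blast
      have "comp_of V ends t x \<in> comps V ends t" using xV unfolding comps_def by blast
      moreover have "x \<in> comp_of V ends t x" by (rule comp_self[OF xV])
      ultimately have "pushl V ends s c t (comp_of V ends t x)"
        using x(2) unfolding pushl_def by auto
      then show "\<exists>w\<in>K. pushl V ends s c t (comp_of V ends t w)" using x(1) by blast
    qed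
    then show ?thesis using True by (simp add: pushl_def)
  qed
qed

lemma pushl_at:
  assumes "x \<in> V"
  shows "pushl V ends s c t (comp_of V ends t x) = (\<exists>w\<in>comp_of V ends t x. c (comp_of V ends s w))"
proof -
  have "comp_of V ends t x \<in> comps V ends t" using assms unfolding comps_def by blast
  then show ?thesis unfolding pushl_def by simp
qed

lemma bad_trans:
  assumes "s \<subseteq> t" "t \<subseteq> u"
  shows "badp V ends s c u = (badp V ends s c t \<or> badp V ends t (pushl V ends s c t) u)"
proof
  assume "badp V ends s c u"
  then obtain v w where vw: "v \<in> V" "w \<in> V" "comp_of V ends u v = comp_of V ends u w"
    "comp_of V ends s v \<noteq> comp_of V ends s w" "c (comp_of V ends s v)" "c (comp_of V ends s w)"
    unfolding badp_def by blast
  show "badp V ends s c t \<or> badp V ends t (pushl V ends s c t) u"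
  proof (cases "comp_of V ends t v = comp_of V ends t w")
    case True then show ?thesis using vw unfolding badp_def by blast
  next
    case False
    have "pushl V ends s c t (comp_of V ends t v)"
      using vw(1,5) comp_self[OF vw(1), of ends t] pushl_at[OF vw(1)] by blast
    moreover have "pushl V ends s c t (comp_of V ends t w)"
      using vw(2,6) comp_self[OF vw(2), of ends t] pushl_at[OF vw(2)] by blast
    ultimately show ?thesis using vw False unfolding badp_def by blast
  qed
next
  assume "badp V ends s c t \<or> badp V ends t (pushl V ends s c t) u"
  then show "badp V ends s c u"
  proof
    assume "badp V ends s c t"
    then obtain v w where vw: "v \<in> V" "w \<in> V" "comp_of V ends t v = comp_of V ends t w"
      "comp_of V ends s v \<noteq> comp_of V ends s w" "c (comp_of V ends s v)" "c (comp_of V ends s w)"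
      unfolding badp_def by blast
    have "comp_of V ends u v = comp_of V ends u w" by (rule comp_coarsen[OF assms(2) vw(3) vw(2)])
    then show ?thesis using vw unfolding badp_def by blast
  next
    assume "badp V ends t (pushl V ends s c t) u"
    then obtain v w where vw: "v \<in> V" "w \<in> V" "comp_of V ends u v = comp_of V ends u w"
      "comp_of V ends t v \<noteq> comp_of V ends t w" "pushl V ends s c t (comp_of V ends t v)"
      "pushl V ends s c t (comp_of V ends t w)"
      unfolding badp_def by blast
    obtain x where x: "x \<in> comp_of V ends t v" "c (comp_of V ends s x)" using vw(5) pushl_at[OF vw(1)] by blast
    obtain y where y: "y \<in> comp_of V ends t w" "c (comp_of V ends s y)" using vw(6) pushl_at[OF vw(2)] by blast
    have xV: "x \<in> V" using x(1) comp_sub[of V ends t v] by blast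
    have yV: "y \<in> V" using y(1) comp_sub[of V ends t w] by blast
    have "comp_of V ends u x = comp_of V ends u v" by (rule comp_in[OF assms(2) x(1)])
    moreover have "comp_of V ends u y = comp_of V ends u w" by (rule comp_in[OF assms(2) y(1)])
    moreover have "comp_of V ends s x \<noteq> comp_of V ends s y"
    proof
      assume h: "comp_of V ends s x = comp_of V ends s y"
      have "comp_of V ends t x = comp_of V ends t y" by (rule comp_coarsen[OF assms(1) h yV])
      moreover have "comp_of V ends t x = comp_of V ends t v" by (rule comp_eq[OF x(1)])
      moreover have "comp_of V ends t y = comp_of V ends t w" by (rule comp_eq[OF y(1)])
      ultimately show False using vw(4) by simp
    qed
    ultimately have "comp_of V ends u x = comp_of V ends u y \<and> comp_of V ends s x \<noteq> comp_of V ends s y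
      \<and> c (comp_of V ends s x) \<and> c (comp_of V ends s y)" using x(2) y(2) vw(3) by simp
    then show ?thesis unfolding badp_def using xV yV by blast
  qed
qed



lemma balanced_mono: "balanced ends \<sigma> t \<Longrightarrow> s \<subseteq> t \<Longrightarrow> balanced ends \<sigma> s"
  unfolding balanced_def by blast

lemma dstate_nz:
  assumes "dstate V E ends lo (s, c) T \<noteq> 0"
  shows "\<exists>e\<in>E - s. \<not> killed V ends s c e \<and> T = (insert e s, merged_label V ends s c e)"
proof (rule ccontr)
  assume "\<not> ?thesis"
  then have "dstate V E ends lo (s, c) T = 0" unfolding dstate_def by (auto intro: sum.neutral)
  then show False using assms by simp
qed

lemma dstate_sub:
  assumes "dstate V E ends lo S T \<noteq> 0"
  shows "fst S \<subseteq> fst T"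
proof -
  obtain s c where S: "S = (s, c)" by (cases S)
  show ?thesis using dstate_nz[of V E ends lo s c T] assms S by auto
qed

lemma enh_finite:
  assumes "finite V" "finite E"
  shows "finite (enh_states V E ends)"
proof -
  have "enh_states V E ends \<subseteq> Pow E \<times> ((\<lambda>A K. K \<in> A) ` Pow (Pow V))"
  proof
    fix S assume S: "S \<in> enh_states V E ends"
    obtain s c where Sd: "S = (s, c)" by (cases S)
    have "(s, c) \<in> enh_states V E ends" using S Sd by simp
    then have s: "s \<subseteq> E" and cc: "\<forall>K. K \<notin> comps V ends s \<longrightarrow> \<not> c K"
      unfolding enh_states_def by simp_all
    have cs: "comps V ends s \<subseteq> Pow V" unfolding comps_def using comp_sub[of V ends s] by blast
    have "{K. c K} \<subseteq> Pow V"
    proof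
      fix K assume "K \<in> {K. c K}"
      then have "K \<in> comps V ends s" using cc by blast
      then show "K \<in> Pow V" using cs by blast
    qed
    then have cin: "c \<in> (\<lambda>A K. K \<in> A) ` Pow (Pow V)"
      by (intro image_eqI[where x="{K. c K}"]) auto
    show "S \<in> Pow E \<times> ((\<lambda>A K. K \<in> A) ` Pow (Pow V))" using s Sd cin by simp
  qed
  moreover have "finite (Pow E \<times> ((\<lambda>A K. K \<in> A) ` Pow (Pow V)))" using assms by simp
  ultimately show ?thesis by (rule finite_subset)
qed

lemma ml_enh:
  assumes "e \<in> E" "s \<subseteq> E"
  shows "(insert e s, merged_label V ends s c e) \<in> enh_states V E ends"
  using assms unfolding enh_states_def merged_label_def by auto

lemma sum_dstate:
  assumes "finite V" "finite E" "s \<subseteq> E"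
  shows "(\<Sum>S'\<in>enh_states V E ends. dstate V E ends lo (s, c) S' * g S')
     = (\<Sum>e\<in>E - s. if \<not> killed V ends s c e then (-1) ^ edge_pos lo s e * g (insert e s, merged_label V ends s c e) else 0)"
proof -
  let ?X = "\<lambda>e. (insert e s, merged_label V ends s c e)"
  let ?P = "\<lambda>e. \<not> killed V ends s c e"
  let ?a = "\<lambda>e. (-1::int) ^ edge_pos lo s e"
  have fin: "finite (enh_states V E ends)" by (rule enh_finite[OF assms(1,2)])
  have "(\<Sum>S'\<in>enh_states V E ends. dstate V E ends lo (s, c) S' * g S')
     = (\<Sum>S'\<in>enh_states V E ends. \<Sum>e\<in>E - s. (if ?P e then (if S' = ?X e then ?a e * g S' else 0) else 0))"
  proof (rule sum.cong[OF refl])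
    fix S' assume "S' \<in> enh_states V E ends"
    have "dstate V E ends lo (s, c) S' * g S' = (\<Sum>e\<in>E - s. (if ?P e \<and> S' = ?X e then ?a e else 0) * g S')"
      unfolding dstate_def by (simp add: sum_distrib_right)
    also have "\<dots> = (\<Sum>e\<in>E - s. (if ?P e then (if S' = ?X e then ?a e * g S' else 0) else 0))"
      by (rule sum.cong[OF refl]) simp
    finally show "dstate V E ends lo (s, c) S' * g S' = (\<Sum>e\<in>E - s. (if ?P e then (if S' = ?X e then ?a e * g S' else 0) else 0))" .
  qed
  also have "\<dots> = (\<Sum>e\<in>E - s. \<Sum>S'\<in>enh_states V E ends. (if ?P e then (if S' = ?X e then ?a e * g S' else 0) else 0))"
    by (rule sum.swap)
  also have "\<dots> = (\<Sum>e\<in>E - s. if ?P e then ?a e * g (?X e) else 0)"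
  proof (rule sum.cong[OF refl])
    fix e assume e: "e \<in> E - s"
    have "?X e \<in> enh_states V E ends" using e assms(3) by (intro ml_enh) auto
    then show "(\<Sum>S'\<in>enh_states V E ends. (if ?P e then (if S' = ?X e then ?a e * g S' else 0) else 0))
        = (if ?P e then ?a e * g (?X e) else 0)"
      using fin by (simp add: sum.delta')
  qed
  finally show ?thesis .
qed

lemma edge_pos_insert:
  assumes "finite s" "e \<notin> s"
  shows "edge_pos lo (insert e s) f = edge_pos lo s f + (if (e, f) \<in> lo then 1 else 0)"
proof (cases "(e, f) \<in> lo")
  case True
  then have "{e' \<in> insert e s. (e', f) \<in> lo} = insert e {e' \<in> s. (e', f) \<in> lo}" by auto
  then show ?thesis using True assms unfolding edge_pos_def by simp
next
  case False
  then have "{e' \<in> insert e s. (e', f) \<in> lo} = {e' \<in> s. (e', f) \<in> lo}" by auto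
  then show ?thesis using False unfolding edge_pos_def by simp
qed

lemma lo_cases:
  assumes "strict_linear_order_on E lo" "e \<in> E" "f \<in> E" "e \<noteq> f"
  shows "((e, f) \<in> lo \<and> (f, e) \<notin> lo) \<or> ((f, e) \<in> lo \<and> (e, f) \<notin> lo)"
proof -
  have t: "trans lo" and i: "irrefl lo" and tot: "total_on E lo"
    using assms(1) unfolding strict_linear_order_on_def by simp_all
  have "(e, f) \<in> lo \<or> (f, e) \<in> lo" using tot assms(2-4) unfolding total_on_def by blast
  moreover have "\<not> ((e, f) \<in> lo \<and> (f, e) \<in> lo)"
  proof
    assume "(e, f) \<in> lo \<and> (f, e) \<in> lo"
    then have "(e, e) \<in> lo" using t unfolding trans_def by blast
    then show False using i unfolding irrefl_def by blast
  qed
  ultimately show ?thesis by blast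
qed

lemma antisym_sum_zero:
  assumes "finite A" "\<And>e f. e \<in> A \<Longrightarrow> f \<in> A \<Longrightarrow> e \<noteq> f \<Longrightarrow> H f e = - H e f"
  shows "(\<Sum>e\<in>A. \<Sum>f\<in>A - {e}. H e f) = (0::int)"
proof -
  let ?M = "\<lambda>e f. if e \<noteq> f then H e f else 0"
  have 1: "(\<Sum>e\<in>A. \<Sum>f\<in>A - {e}. H e f) = (\<Sum>e\<in>A. \<Sum>f\<in>A. ?M e f)"
  proof (rule sum.cong[OF refl])
    fix e assume "e \<in> A"
    show "(\<Sum>f\<in>A - {e}. H e f) = (\<Sum>f\<in>A. ?M e f)"
    proof -
      have "A \<inter> {f. e \<noteq> f} = A - {e}" by blast
      then show ?thesis using assms(1) by (simp add: sum.If_cases)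
    qed
  qed
  have "(\<Sum>e\<in>A. \<Sum>f\<in>A. ?M e f) = (\<Sum>f\<in>A. \<Sum>e\<in>A. ?M e f)" by (rule sum.swap)
  also have "\<dots> = (\<Sum>f\<in>A. \<Sum>e\<in>A. - ?M f e)"
  proof (intro sum.cong refl)
    fix f e assume "f \<in> A" "e \<in> A"
    then show "?M e f = - ?M f e" using assms(2)[of f e] by (cases "e = f") simp_all
  qed
  also have "\<dots> = - (\<Sum>e\<in>A. \<Sum>f\<in>A. ?M e f)" by (simp add: sum_negf)
  finally show ?thesis using 1 by simp
qed



lemma d2_zero:
  assumes fV: "finite V" and fE: "finite E" and ends: "\<forall>e\<in>E. fst (ends e) \<in> V \<and> snd (ends e) \<in> V"
    and lo: "strict_linear_order_on E lo" and sE: "s \<subseteq> E"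
  shows "(\<Sum>S'\<in>enh_states V E ends. dstate V E ends lo (s, c) S' * dstate V E ends lo S' T) = 0"
proof -
  let ?A = "E - s"
  let ?c1 = "\<lambda>e. pushl V ends s c (insert e s)"
  let ?u = "\<lambda>e f. insert f (insert e s)"
  define H where "H = (\<lambda>e f. if \<not> badp V ends s c (?u e f) \<and> T = (?u e f, pushl V ends s c (?u e f))
      then (-1::int) ^ (edge_pos lo s e + edge_pos lo (insert e s) f) else 0)"
  have fs: "finite s" using sE fE finite_subset by blast
  have "(\<Sum>S'\<in>enh_states V E ends. dstate V E ends lo (s, c) S' * dstate V E ends lo S' T)
    = (\<Sum>e\<in>?A. if \<not> killed V ends s c e then (-1) ^ edge_pos lo s e * dstate V E ends lo (insert e s, merged_label V ends s c e) T else 0)"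
    by (rule sum_dstate[OF fV fE sE])
  also have "\<dots> = (\<Sum>e\<in>?A. \<Sum>f\<in>?A - {e}. H e f)"
  proof (rule sum.cong[OF refl])
    fix e assume e: "e \<in> ?A"
    obtain a b where ab: "ends e = (a, b)" by (cases "ends e")
    have aV: "a \<in> V" and bV: "b \<in> V" using ends e ab by (metis DiffD1 fst_conv snd_conv)+
    have ml: "merged_label V ends s c e = ?c1 e" by (rule push_single[where ends=ends and e=e and a=a and b=b and V=V, OF ab aV bV])
    have ke: "killed V ends s c e = badp V ends s c (insert e s)" by (rule killed_bad[where ends=ends and e=e and a=a and b=b and V=V, OF ab aV bV])
    have EA: "E - insert e s = ?A - {e}" by blast
    have inner: "\<And>f. f \<in> ?A - {e} \<Longrightarrow>
        (if \<not> badp V ends s c (insert e s) then (-1) ^ edge_pos lo s e *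
          (if \<not> killed V ends (insert e s) (?c1 e) f \<and> T = (insert f (insert e s), merged_label V ends (insert e s) (?c1 e) f)
           then (-1) ^ edge_pos lo (insert e s) f else 0) else 0) = H e f"
    proof -
      fix f assume f: "f \<in> ?A - {e}"
      obtain p q where pq: "ends f = (p, q)" by (cases "ends f")
      have pV: "p \<in> V" and qV: "q \<in> V" using ends f pq by (metis DiffD1 fst_conv snd_conv)+
      have k2: "killed V ends (insert e s) (?c1 e) f = badp V ends (insert e s) (?c1 e) (?u e f)"
        by (rule killed_bad[where ends=ends and e=f and a=p and b=q and V=V, OF pq pV qV])
      have m2: "merged_label V ends (insert e s) (?c1 e) f = pushl V ends (insert e s) (?c1 e) (?u e f)"
        by (rule push_single[where ends=ends and e=f and a=p and b=q and V=V, OF pq pV qV])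
      have pt: "pushl V ends (insert e s) (?c1 e) (?u e f) = pushl V ends s c (?u e f)"
        by (rule push_trans) auto
      have bt: "badp V ends s c (?u e f) = (badp V ends s c (insert e s) \<or> badp V ends (insert e s) (?c1 e) (?u e f))"
        by (rule bad_trans) auto
      show "(if \<not> badp V ends s c (insert e s) then (-1) ^ edge_pos lo s e *
          (if \<not> killed V ends (insert e s) (?c1 e) f \<and> T = (insert f (insert e s), merged_label V ends (insert e s) (?c1 e) f)
           then (-1) ^ edge_pos lo (insert e s) f else 0) else 0) = H e f"
        unfolding k2 m2 pt H_def bt by (simp add: power_add)
    qed
    have "(if \<not> killed V ends s c e then (-1) ^ edge_pos lo s e * dstate V E ends lo (insert e s, merged_label V ends s c e) T else 0)
      = (if \<not> badp V ends s c (insert e s) then (-1) ^ edge_pos lo s e *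
          (\<Sum>f\<in>?A - {e}. if \<not> killed V ends (insert e s) (?c1 e) f \<and> T = (insert f (insert e s), merged_label V ends (insert e s) (?c1 e) f)
           then (-1) ^ edge_pos lo (insert e s) f else 0) else 0)"
      unfolding ke ml dstate_def by (simp add: EA)
    also have "\<dots> = (\<Sum>f\<in>?A - {e}. (if \<not> badp V ends s c (insert e s) then (-1) ^ edge_pos lo s e *
          (if \<not> killed V ends (insert e s) (?c1 e) f \<and> T = (insert f (insert e s), merged_label V ends (insert e s) (?c1 e) f)
           then (-1) ^ edge_pos lo (insert e s) f else 0) else 0))"
      by (simp add: sum_distrib_left)
    also have "\<dots> = (\<Sum>f\<in>?A - {e}. H e f)"
      by (rule sum.cong[OF refl]) (rule inner)
    finally show "(if \<not> killed V ends s c e then (-1) ^ edge_pos lo s e * dstate V E ends lo (insert e s, merged_label V ends s c e) T else 0)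
      = (\<Sum>f\<in>?A - {e}. H e f)" .
  qed
  also have "\<dots> = 0"
  proof (rule antisym_sum_zero)
    show "finite ?A" using fE by simp
  next
    fix e f assume e: "e \<in> ?A" and f: "f \<in> ?A" and ef: "e \<noteq> f"
    have u: "?u f e = ?u e f" by (rule insert_commute)
    have pe: "edge_pos lo (insert e s) f = edge_pos lo s f + (if (e, f) \<in> lo then 1 else 0)"
      using fs e by (intro edge_pos_insert) auto
    have pf: "edge_pos lo (insert f s) e = edge_pos lo s e + (if (f, e) \<in> lo then 1 else 0)"
      using fs f by (intro edge_pos_insert) auto
    have sg: "(-1::int) ^ (edge_pos lo s f + edge_pos lo (insert f s) e) = - ((-1) ^ (edge_pos lo s e + edge_pos lo (insert e s) f))"
      using lo_cases[OF lo, of e f] e f ef unfolding pe pf by (auto simp: power_add)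
    show "H f e = - H e f" unfolding H_def u sg by simp
  qed
  finally show ?thesis .
qed



lemma fb_dmap_fb: "fb ends \<sigma> (dmap V E ends lo (fb ends \<sigma> y)) = fb ends \<sigma> (dmap V E ends lo y)"
proof
  fix T
  show "fb ends \<sigma> (dmap V E ends lo (fb ends \<sigma> y)) T = fb ends \<sigma> (dmap V E ends lo y) T"
  proof (cases "balanced ends \<sigma> (fst T)")
    case False then show ?thesis by (simp add: fb_def)
  next
    case True
    have "dmap V E ends lo (fb ends \<sigma> y) T = dmap V E ends lo y T"
      unfolding dmap_def
    proof (rule sum.cong[OF refl])
      fix S
      show "fb ends \<sigma> y S * dstate V E ends lo S T = y S * dstate V E ends lo S T"
      proof (cases "dstate V E ends lo S T = 0")
        case True then show ?thesis by simp
      next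
        case False
        then have "fst S \<subseteq> fst T" by (rule dstate_sub)
        then have "balanced ends \<sigma> (fst S)" by (rule balanced_mono[OF \<open>balanced ends \<sigma> (fst T)\<close>])
        then show ?thesis by (simp add: fb_def)
      qed
    qed
    then show ?thesis by (simp add: fb_def)
  qed
qed

lemma dmap_nz:
  assumes "dmap V E ends lo z T \<noteq> 0"
  shows "\<exists>S\<in>enh_states V E ends. z S \<noteq> 0 \<and> dstate V E ends lo S T \<noteq> 0"
proof (rule ccontr)
  assume "\<not> ?thesis"
  then have "dmap V E ends lo z T = 0" unfolding dmap_def by (auto intro: sum.neutral)
  then show False using assms by simp
qed

lemma dd_zero:
  assumes fV: "finite V" and fE: "finite E" and ends: "\<forall>e\<in>E. fst (ends e) \<in> V \<and> snd (ends e) \<in> V"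
    and lo: "strict_linear_order_on E lo"
  shows "dmap V E ends lo (dmap V E ends lo z) = (\<lambda>_. 0)"
proof
  fix T
  let ?en = "enh_states V E ends"
  let ?d = "dstate V E ends lo"
  have fin: "finite ?en" by (rule enh_finite[OF fV fE])
  have "dmap V E ends lo (dmap V E ends lo z) T = (\<Sum>S'\<in>?en. (\<Sum>S\<in>?en. z S * ?d S S') * ?d S' T)"
    unfolding dmap_def ..
  also have "\<dots> = (\<Sum>S'\<in>?en. \<Sum>S\<in>?en. z S * (?d S S' * ?d S' T))"
    by (simp add: sum_distrib_right mult.assoc)
  also have "\<dots> = (\<Sum>S\<in>?en. \<Sum>S'\<in>?en. z S * (?d S S' * ?d S' T))"
    by (rule sum.swap)
  also have "\<dots> = (\<Sum>S\<in>?en. z S * (\<Sum>S'\<in>?en. ?d S S' * ?d S' T))"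
    by (simp add: sum_distrib_left)
  also have "\<dots> = 0"
  proof (rule sum.neutral, rule ballI)
    fix S assume S: "S \<in> ?en"
    obtain s c where Sd: "S = (s, c)" by (cases S)
    have "s \<subseteq> E" using S Sd unfolding enh_states_def by simp
    then have "(\<Sum>S'\<in>?en. ?d (s, c) S' * ?d S' T) = 0" by (rule d2_zero[OF fV fE ends lo])
    then show "z S * (\<Sum>S'\<in>?en. ?d S S' * ?d S' T) = 0" using Sd by simp
  qed
  finally show "dmap V E ends lo (dmap V E ends lo z) T = 0" .
qed

theorem mainTheorem9:
  fixes V :: "'v set" and E :: "'e set" and ends :: "'e \<Rightarrow> 'v \<times> 'v"
    and \<sigma> :: "'e \<Rightarrow> int" and lo :: "('e \<times> 'e) set" and i :: nat
  assumes "finite V" and "finite E"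
    and "\<forall>e\<in>E. fst (ends e) \<in> V \<and> snd (ends e) \<in> V"
    and "\<forall>e\<in>E. \<sigma> e = 1 \<or> \<sigma> e = -1"
    and "strict_linear_order_on E lo"
  shows "(\<forall>z \<in> C_grp V E ends i. fb ends \<sigma> z = (\<lambda>_. 0) \<longrightarrow>
            fb ends \<sigma> (dmap V E ends lo z) = (\<lambda>_. 0))
       \<and> (\<forall>z \<in> Cb_grp V E ends \<sigma> i. db V E ends \<sigma> lo z \<in> Cb_grp V E ends \<sigma> (Suc i))
       \<and> (\<forall>z \<in> C_grp V E ends i. db V E ends \<sigma> lo (fb ends \<sigma> z) = fb ends \<sigma> (dmap V E ends lo z))
       \<and> (\<forall>z \<in> Cb_grp V E ends \<sigma> i. db V E ends \<sigma> lo (db V E ends \<sigma> lo z) = (\<lambda>_. 0))"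
proof (intro conjI ballI impI)
  fix z assume "z \<in> C_grp V E ends i" "fb ends \<sigma> z = (\<lambda>_. 0)"
  have "fb ends \<sigma> (dmap V E ends lo z) = fb ends \<sigma> (dmap V E ends lo (fb ends \<sigma> z))"
    by (rule fb_dmap_fb[symmetric])
  also have "dmap V E ends lo (fb ends \<sigma> z) = (\<lambda>_. 0)"
    unfolding \<open>fb ends \<sigma> z = (\<lambda>_. 0)\<close> dmap_def by simp
  finally show "fb ends \<sigma> (dmap V E ends lo z) = (\<lambda>_. 0)" by (simp add: fb_def)
next
  fix z assume z: "z \<in> Cb_grp V E ends \<sigma> i"
  have key: "\<forall>T. db V E ends \<sigma> lo z T \<noteq> 0 \<longrightarrow> (T \<in> enh_states V E ends \<and> card (fst T) = Suc i) \<and> balanced ends \<sigma> (fst T)"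
  proof (intro allI impI)
    fix T assume T: "db V E ends \<sigma> lo z T \<noteq> 0"
    then have bal: "balanced ends \<sigma> (fst T)" and nz: "dmap V E ends lo z T \<noteq> 0"
      unfolding db_def fb_def by (auto split: if_splits)
    then obtain S where S: "S \<in> enh_states V E ends" "z S \<noteq> 0" "dstate V E ends lo S T \<noteq> 0"
      using dmap_nz by blast
    obtain s c where Sd: "S = (s, c)" by (cases S)
    have sE: "s \<subseteq> E" using S(1) Sd unfolding enh_states_def by simp
    have cs: "card s = i" using z S(2) Sd unfolding Cb_grp_def C_grp_def by auto
    obtain e where e: "e \<in> E - s" "T = (insert e s, merged_label V ends s c e)"
      using dstate_nz[of V E ends lo s c T] S(3) Sd by auto
    have fs: "finite s" using sE assms(2) finite_subset by blast
    have "T \<in> enh_states V E ends \<and> card (fst T) = Suc i"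
      using ml_enh[of e E s V ends c] e sE fs cs by auto
    then show "(T \<in> enh_states V E ends \<and> card (fst T) = Suc i) \<and> balanced ends \<sigma> (fst T)" using bal by simp
  qed
  then show "db V E ends \<sigma> lo z \<in> Cb_grp V E ends \<sigma> (Suc i)"
    unfolding Cb_grp_def C_grp_def by blast
next
  fix z assume "z \<in> C_grp V E ends i"
  show "db V E ends \<sigma> lo (fb ends \<sigma> z) = fb ends \<sigma> (dmap V E ends lo z)"
    unfolding db_def by (rule fb_dmap_fb)
next
  fix z assume "z \<in> Cb_grp V E ends \<sigma> i"
  have "db V E ends \<sigma> lo (db V E ends \<sigma> lo z) = fb ends \<sigma> (dmap V E ends lo (dmap V E ends lo z))"
    unfolding db_def by (rule fb_dmap_fb)
  also have "\<dots> = (\<lambda>_. 0)" unfolding dd_zero[OF assms(1,2,3,5)] by (simp add: fb_def)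
  finally show "db V E ends \<sigma> lo (db V E ends \<sigma> lo z) = (\<lambda>_. 0)" .
qed

end
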